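(* For all $n\in\mathbb{N}$ with $n\geq 2$, $$\iota(2^n-1)\leq \frac{3}{2}n-\left\lfloor \frac{n-2}{2^{\lfloor \frac{\log n}{\log 2}-1\rfloor+1}}\right\rfloor-\left\lfloor \frac{\log n}{\log 2}-1\right\rfloor+\frac{1}{4}\left(1-(-1)^n\right)+\iota(n).$$
   Context: An addition chain producing $N$ is a sequence $1,2,s_3,\ldots,s_k=N$ in which every term after the first is the sum of two (not necessarily distinct) earlier terms; its length is the number of terms excluding the initial $1$. $\iota(N)$ denotes the length of the shortest addition chain producing $N$. $\lfloor\cdot\rfloor$ is the floor function and $\log$ the natural logarithm. *)

theory Defs
  imports Complex_Main
begin

definition addition_chain :: "nat list \<Rightarrow> bool" where
  "addition_chain c \<longleftrightarrow> c \<noteq> [] \<and> c ! 0 = 1 \<and>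
     (\<forall>i. 0 < i \<and> i < length c \<longrightarrow> (\<exists>j k. j < i \<and> k < i \<and> c ! i = c ! j + c ! k))"

definition chain_length :: "nat list \<Rightarrow> nat" where
  "chain_length c = length c - 1"

definition iota :: "nat \<Rightarrow> nat" where
  "iota N = (LEAST l. \<exists>c. addition_chain c \<and> last c = N \<and> chain_length c = l)"

end

theory Submission
  imports Defs
begin

lemma chain_ext:
  assumes "addition_chain c" "x \<in> set c" "y \<in> set c"
  shows "addition_chain (c @ [x + y])"
proof -
  obtain j where j: "j < length c" "c ! j = x" using assms(2) by (auto simp: in_set_conv_nth)
  obtain k where k: "k < length c" "c ! k = y" using assms(3) by (auto simp: in_set_conv_nth)
  show ?thesis unfolding addition_chain_def
  proof (intro conjI allI impI)
    show "c @ [x + y] \<noteq> []" by simp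
    show "(c @ [x + y]) ! 0 = 1" using assms(1) by (auto simp: addition_chain_def nth_append)
    fix i assume i: "0 < i \<and> i < length (c @ [x + y])"
    show "\<exists>j k. j < i \<and> k < i \<and> (c @ [x + y]) ! i = (c @ [x + y]) ! j + (c @ [x + y]) ! k"
    proof (cases "i < length c")
      case True
      then obtain j' k' where "j' < i" "k' < i" "c ! i = c ! j' + c ! k'"
        using assms(1) i unfolding addition_chain_def by blast
      then show ?thesis using True by (intro exI[of _ j'] exI[of _ k']) (auto simp: nth_append)
    next
      case False
      then have "i = length c" using i by simp
      then show ?thesis using j k by (intro exI[of _ j] exI[of _ k]) (auto simp: nth_append)
    qed
  qed
qed

lemma one_in: "addition_chain c \<Longrightarrow> 1 \<in> set c"
  unfolding addition_chain_def by (metis length_greater_0_conv nth_mem)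

lemma last_in: "addition_chain c \<Longrightarrow> last c \<in> set c"
  unfolding addition_chain_def by simp

lemma even_chain:
  "\<exists>c. addition_chain c \<and> last c = 2 ^ (2 * j + 2) - 1 \<and> 3 \<in> set c \<and> length c = 3 + 3 * j"
proof (induction j)
  case 0
  have "addition_chain [1,2,3]"
    unfolding addition_chain_def
  proof (intro conjI allI impI)
    fix i assume "0 < i \<and> i < length [1::nat,2,3]"
    then have "i = 1 \<or> i = 2" by auto
    then show "\<exists>j k. j < i \<and> k < i \<and> [1::nat,2,3] ! i = [1::nat,2,3] ! j + [1::nat,2,3] ! k"
    proof
      assume "i = 1" then show ?thesis by (intro exI[of _ 0] exI[of _ 0]) auto
    next
      assume "i = 2" then show ?thesis by (intro exI[of _ 0] exI[of _ 1]) auto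
    qed
  qed auto
  then show ?case by (intro exI[of _ "[1,2,3]"]) auto
next
  case (Suc j)
  then obtain c where c: "addition_chain c" "last c = 2 ^ (2 * j + 2) - 1" "3 \<in> set c"
    "length c = 3 + 3 * j" by blast
  define x where "x = last c"
  define c1 where "c1 = c @ [x + x]"
  define c2 where "c2 = c1 @ [(x+x) + (x+x)]"
  define c3 where "c3 = c2 @ [((x+x) + (x+x)) + 3]"
  have a1: "addition_chain c1" unfolding c1_def using chain_ext c last_in x_def by blast
  have a2: "addition_chain c2" unfolding c2_def using chain_ext[OF a1] by (simp add: c1_def)
  have a3: "addition_chain c3" unfolding c3_def using chain_ext[OF a2] c(3) by (simp add: c2_def c1_def)
  define P where "P = (2::nat) ^ (2 * j + 2)"
  have p: "P \<ge> 1" unfolding P_def by simp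
  have "(2::nat) ^ (2 * Suc j + 2) = 4 * P" unfolding P_def by (simp add: power_add)
  moreover have "last c3 = 4 * (P - 1) + 3" unfolding c3_def x_def c(2) P_def by simp
  ultimately have "last c3 = 2 ^ (2 * Suc j + 2) - 1" using p by simp
  moreover have "3 \<in> set c3" using c(3) by (simp add: c3_def c2_def c1_def)
  moreover have "length c3 = 3 + 3 * Suc j" using c(4) by (simp add: c3_def c2_def c1_def)
  ultimately show ?case using a3 by blast
qed

lemma odd_chain:
  "\<exists>c. addition_chain c \<and> last c = 2 ^ (2 * j + 3) - 1 \<and> length c = 5 + 3 * j"
proof -
  obtain c where c: "addition_chain c" "last c = 2 ^ (2 * j + 2) - 1"
    "length c = 3 + 3 * j" using even_chain by blast
  define x where "x = last c"
  define c1 where "c1 = c @ [x + x]"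
  define c2 where "c2 = c1 @ [(x+x) + 1]"
  have a1: "addition_chain c1" unfolding c1_def using chain_ext c last_in x_def by blast
  have i1: "x + x \<in> set c1" "1 \<in> set c1" using one_in[OF c(1)] by (auto simp: c1_def)
  have a2: "addition_chain c2" unfolding c2_def using chain_ext[OF a1 i1] .
  define P where "P = (2::nat) ^ (2 * j + 2)"
  have p: "P \<ge> 1" unfolding P_def by simp
  have "(2::nat) ^ (2 * j + 3) = 2 * P" unfolding P_def by (simp add: power_add)
  moreover have "last c2 = 2 * (P - 1) + 1" unfolding c2_def c1_def x_def c(2) P_def by simp
  ultimately have "last c2 = 2 ^ (2 * j + 3) - 1" using p by simp
  then show ?thesis using a2 c(3) by (intro exI[of _ c2]) (simp add: c2_def c1_def)
qed

lemma iota_le: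
  assumes "addition_chain c" "last c = N"
  shows "iota N \<le> length c - 1"
proof -
  have "\<exists>c'. addition_chain c' \<and> last c' = N \<and> chain_length c' = length c - 1"
    using assms unfolding chain_length_def by auto
  then show ?thesis unfolding iota_def by (rule Least_le)
qed

lemma chain_bound:
  assumes "addition_chain c" "i < length c"
  shows "c ! i \<le> 2 ^ i"
  using assms(2)
proof (induction i rule: less_induct)
  case (less i)
  show ?case
  proof (cases "i = 0")
    case True then show ?thesis using assms(1) by (simp add: addition_chain_def)
  next
    case False
    have "\<forall>i. 0 < i \<and> i < length c \<longrightarrow> (\<exists>j k. j < i \<and> k < i \<and> c ! i = c ! j + c ! k)"
      using assms(1) unfolding addition_chain_def by simp
    then have "\<exists>j k. j < i \<and> k < i \<and> c ! i = c ! j + c ! k" using less.prems False by simp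
    then obtain j k where jk: "j < i" "k < i" "c ! i = c ! j + c ! k" by blast
    have "c ! j \<le> 2 ^ j" using less.IH[of j] less.prems jk by simp
    also have "\<dots> \<le> 2 ^ (i - 1)" using jk by (intro power_increasing) linarith+
    finally have 1: "c ! j \<le> 2 ^ (i - 1)" .
    have "c ! k \<le> 2 ^ k" using less.IH[of k] less.prems jk by simp
    also have "\<dots> \<le> 2 ^ (i - 1)" using jk by (intro power_increasing) linarith+
    finally have 2: "c ! k \<le> 2 ^ (i - 1)" .
    have "(2::nat) ^ i = 2 ^ Suc (i - 1)" using False by simp
    also have "\<dots> = 2 * 2 ^ (i - 1)" by (rule power_Suc)
    finally have "(2::nat) ^ i = 2 * 2 ^ (i - 1)" .
    then show ?thesis using jk(3) 1 2 by linarith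
  qed
qed

lemma iota_lower:
  assumes "N \<ge> 1"
  shows "N \<le> 2 ^ iota N"
proof -
  define c where "c = map Suc [0..<N]"
  have ac: "addition_chain c" unfolding addition_chain_def c_def
  proof (intro conjI allI impI)
    fix i assume "0 < i \<and> i < length (map Suc [0..<N])"
    then show "\<exists>j k. j < i \<and> k < i \<and> map Suc [0..<N] ! i = map Suc [0..<N] ! j + map Suc [0..<N] ! k"
      by (intro exI[of _ "i - 1"] exI[of _ 0]) auto
  next
    show "map Suc [0..<N] \<noteq> []" using assms by simp
  next
    show "map Suc [0..<N] ! 0 = 1" using assms by simp
  qed
  have "last c = N" unfolding c_def using assms by (simp add: last_map)
  then have ex: "\<exists>l. \<exists>c. addition_chain c \<and> last c = N \<and> chain_length c = l" using ac by auto
  have "\<exists>c. addition_chain c \<and> last c = N \<and> chain_length c = iota N"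
    unfolding iota_def by (rule LeastI_ex[OF ex])
  then obtain c' where c': "addition_chain c'" "last c' = N" "chain_length c' = iota N"
    by blast
  have ne: "c' \<noteq> []" using c'(1) by (simp add: addition_chain_def)
  then have L: "last c' = c' ! iota N" using c'(3) by (simp add: last_conv_nth chain_length_def)
  have I: "iota N < length c'"
  proof -
    have "length c' > 0" using ne by simp
    then show ?thesis using c'(3) unfolding chain_length_def by linarith
  qed
  have "c' ! iota N \<le> 2 ^ iota N" by (rule chain_bound[OF c'(1) I])
  moreover have "N = c' ! iota N" by (rule HOL.trans[OF c'(2)[symmetric] L])
  ultimately show ?thesis by (simp only:)
qed

lemma chain_len:
  assumes "n \<ge> 2"
  shows "2 * real (iota (2 ^ n - 1)) \<le> 3 * real n - 1 + (if odd n then 1 else 0)"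
proof (cases "even n")
  case True
  then obtain j where j: "n = 2 * j + 2" using assms
    by (intro that[of "n div 2 - 1"]) auto
  obtain c where c: "addition_chain c" "last c = 2 ^ n - 1" "length c = 3 + 3 * j"
    using even_chain j by blast
  have "iota (2 ^ n - 1) \<le> 2 + 3 * j" using iota_le[OF c(1,2)] c(3) by simp
  then show ?thesis using True j by simp
next
  case False
  then obtain j where j: "n = 2 * j + 3" using assms
    by (intro that[of "n div 2 - 1"]) presburger
  obtain c where c: "addition_chain c" "last c = 2 ^ n - 1" "length c = 5 + 3 * j"
    using odd_chain j by blast
  have "iota (2 ^ n - 1) \<le> 4 + 3 * j" using iota_le[OF c(1,2)] c(3) by simp
  then show ?thesis using False j by simp
qed

lemma fin_odd: "(2::real) * I \<le> 3 * N - 1 + 1 \<Longrightarrow> K \<le> T \<Longrightarrow> E \<le> 1 \<Longrightarrow>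
  I \<le> 3 / 2 * N - E - (K - 1) + 1 / 4 * (1 - - 1) + T" by (simp add: field_simps)

lemma fin_even: "(2::real) * I \<le> 3 * N - 1 + 0 \<Longrightarrow> K \<le> T \<Longrightarrow> E \<le> 1 \<Longrightarrow>
  I \<le> 3 / 2 * N - E - (K - 1) + 1 / 4 * (1 - 1) + T" by (simp add: field_simps)

theorem mainTheorem13:
  fixes n :: nat
  assumes "n \<ge> 2"
  shows "real (iota (2 ^ n - 1)) \<le>
           3 / 2 * real n
         - real_of_int \<lfloor>(real n - 2) / 2 powr (real_of_int \<lfloor>ln (real n) / ln 2 - 1\<rfloor> + 1)\<rfloor>
         - real_of_int \<lfloor>ln (real n) / ln 2 - 1\<rfloor>
         + 1 / 4 * (1 - (-1) ^ n)
         + real (iota n)"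
proof -
  define k where "k = \<lfloor>log 2 (real n)\<rfloor>"
  have lg: "ln (real n) / ln 2 = log 2 (real n)" by (simp add: log_def)
  have k1: "\<lfloor>ln (real n) / ln 2 - 1\<rfloor> = k - 1" unfolding lg k_def by simp
  have npos: "real n > 0" using assms by simp
  have kb: "2 powr k \<le> real n \<and> real n < 2 powr (k + 1)"
    using floor_log_eq_powr_iff[OF npos, of 2 k] k_def by simp
  have k0: "k \<ge> 0" using assms k_def by simp
  have pk: "2 powr (real_of_int (k - 1) + 1) = 2 powr k" by simp
  have e: "\<lfloor>(real n - 2) / 2 powr k\<rfloor> \<le> 1"
  proof -
    have "2 powr (k+1) = 2 * 2 powr k" by (simp add: powr_add)
    then have "(real n - 2) / 2 powr k < 2" using kb by (simp add: divide_less_eq)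
    then show ?thesis by linarith
  qed
  have t: "n \<le> 2 ^ iota n" using iota_lower assms by simp
  have t': "real n \<le> 2 powr (real (iota n))"
    using t by (simp add: powr_realpow)
  have "2 powr k \<le> 2 powr (real (iota n))"
    using kb t' by linarith
  then have kt: "real_of_int k \<le> real (iota n)" by simp
  have e': "real_of_int \<lfloor>(real n - 2) / 2 powr k\<rfloor> \<le> 1" using e by (metis of_int_1 of_int_le_iff)
  note cl = chain_len[OF assms]
  show ?thesis
  proof (cases "odd n")
    case True
    then have "(-1::real) ^ n = -1" by simp
    moreover have "(if odd n then 1 else 0) = (1::real)" using True by simp
    moreover have "real_of_int (k - 1) = real_of_int k - 1" by simp
    ultimately show ?thesis unfolding k1 pk using kt e' cl by (simp only:) (rule fin_odd)
  next
    case False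
    then have "(-1::real) ^ n = 1" by simp
    moreover have "(if odd n then 1 else 0) = (0::real)" using False by simp
    moreover have "real_of_int (k - 1) = real_of_int k - 1" by simp
    ultimately show ?thesis unfolding k1 pk using kt e' cl by (simp only:) (rule fin_even)
  qed
qed

end
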